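(* Let $d=(d_1,\ldots,d_n)$ be a degree sequence with $n\ge 4$, and let $m=\frac12\sum_i d_i$. There is a realization of $d$ as a bridge-less bipartite cactus if and only if $m\le 2\left\lfloor\frac{2(n-1)}{3}\right\rfloor$, $m$ is even, and $d_i$ is even for every $i$.
   Context: A degree sequence is a sequence $d=(d_1,\ldots,d_n)$ of integers with $d_i\in\{1,\ldots,n-1\}$, even sum, and $d_1\ge\cdots\ge d_n$. A realization of $d$ is a simple graph on $\{1,\ldots,n\}$ in which vertex $i$ has degree $d_i$. A cactus is a connected simple graph in which every edge lies on at most one cycle; it is bridge-less if no edge's removal disconnects it. *)

theory Defs
  imports Main
begin

definition degree_sequence :: "nat \<Rightarrow> (nat \<Rightarrow> nat) \<Rightarrow> bool" where
  "degree_sequence n d \<longleftrightarrow>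
     (\<forall>i\<in>{1..n}. 1 \<le> d i \<and> d i \<le> n - 1) \<and>
     even (\<Sum>i=1..n. d i) \<and>
     (\<forall>i\<in>{1..n}. \<forall>j\<in>{1..n}. i \<le> j \<longrightarrow> d j \<le> d i)"

definition simple_graph :: "'a set \<Rightarrow> 'a set set \<Rightarrow> bool" where
  "simple_graph V E \<longleftrightarrow> (\<forall>e\<in>E. \<exists>u v. u \<in> V \<and> v \<in> V \<and> u \<noteq> v \<and> e = {u, v})"

definition realization :: "nat \<Rightarrow> (nat \<Rightarrow> nat) \<Rightarrow> nat set set \<Rightarrow> bool" where
  "realization n d E \<longleftrightarrow> simple_graph {1..n} E \<and>
     (\<forall>i\<in>{1..n}. card {e\<in>E. i \<in> e} = d i)"

definition reachable :: "'a set set \<Rightarrow> 'a \<Rightarrow> 'a \<Rightarrow> bool" where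
  "reachable E u v \<longleftrightarrow> (u, v) \<in> {(x, y). {x, y} \<in> E}\<^sup>*"

definition connected_graph :: "'a set \<Rightarrow> 'a set set \<Rightarrow> bool" where
  "connected_graph V E \<longleftrightarrow> (\<forall>u\<in>V. \<forall>v\<in>V. reachable E u v)"

definition cycle_edges :: "'a list \<Rightarrow> 'a set set" where
  "cycle_edges vs = {{vs ! i, vs ! ((i + 1) mod length vs)} | i. i < length vs}"

definition is_cycle :: "'a set set \<Rightarrow> 'a set set \<Rightarrow> bool" where
  "is_cycle E C \<longleftrightarrow> (\<exists>vs. distinct vs \<and> 3 \<le> length vs \<and> C = cycle_edges vs \<and> C \<subseteq> E)"

definition cactus :: "'a set \<Rightarrow> 'a set set \<Rightarrow> bool" where
  "cactus V E \<longleftrightarrow> simple_graph V E \<and> connected_graph V E \<and>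
     (\<forall>e\<in>E. \<forall>C1 C2. is_cycle E C1 \<and> is_cycle E C2 \<and> e \<in> C1 \<and> e \<in> C2 \<longrightarrow> C1 = C2)"

definition bridgeless :: "'a set \<Rightarrow> 'a set set \<Rightarrow> bool" where
  "bridgeless V E \<longleftrightarrow> (\<forall>e\<in>E. connected_graph V (E - {e}))"

definition bipartite :: "'a set \<Rightarrow> 'a set set \<Rightarrow> bool" where
  "bipartite V E \<longleftrightarrow> (\<exists>A\<subseteq>V. \<forall>e\<in>E. card (e \<inter> A) = 1)"

end

theory Submission
  imports Defs
begin


lemma reach_refl: "reachable E u u"
  unfolding reachable_def by simp

lemma reach_edge: "{x, y} \<in> E \<Longrightarrow> reachable E x y"
  unfolding reachable_def by (rule r_into_rtrancl) simp

lemma reach_trans: "reachable E x y \<Longrightarrow> reachable E y z \<Longrightarrow> reachable E x z"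
  unfolding reachable_def by (rule rtrancl_trans)

lemma reach_sym: "reachable E x y \<Longrightarrow> reachable E y x"
  unfolding reachable_def
proof (induction rule: rtrancl_induct)
  case base
  then show ?case by simp
next
  case (step y z)
  then have "(z, y) \<in> {(x, y). {x, y} \<in> E}\<^sup>*"
    by (intro r_into_rtrancl) (simp add: insert_commute)
  then show ?case using step(3) by (rule rtrancl_trans)
qed

lemma reach_mono: "E \<subseteq> F \<Longrightarrow> reachable E x y \<Longrightarrow> reachable F x y"
  unfolding reachable_def
  by (erule rtrancl_mono[THEN subsetD, rotated]) auto

definition spath :: "'a set set \<Rightarrow> 'a list \<Rightarrow> bool" where
  "spath F ps \<longleftrightarrow> ps \<noteq> [] \<and> distinct ps \<and> (\<forall>i. Suc i < length ps \<longrightarrow> {ps ! i, ps ! Suc i} \<in> F)"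

lemma reach_path:
  assumes "reachable F u x"
  shows "\<exists>ps. spath F ps \<and> hd ps = u \<and> last ps = x"
  using assms unfolding reachable_def
proof (induction rule: rtrancl_induct)
  case base
  show ?case by (rule exI[of _ "[u]"]) (simp add: spath_def)
next
  case (step x y)
  then obtain ps where ps: "spath F ps" "hd ps = u" "last ps = x" by blast
  have xy: "{x, y} \<in> F" using step(2) by simp
  show ?case
  proof (cases "y \<in> set ps")
    case True
    then obtain j where j: "j < length ps" "ps ! j = y" by (auto simp: in_set_conv_nth)
    let ?qs = "take (Suc j) ps"
    have "spath F ?qs" using ps(1) j unfolding spath_def by auto
    moreover have "hd ?qs = u" using ps j by (cases ps) auto
    moreover have "last ?qs = y" using j
      by (simp add: take_Suc_conv_app_nth)
    ultimately show ?thesis by blast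
  next
    case False
    let ?qs = "ps @ [y]"
    have ne: "ps \<noteq> []" using ps(1) by (simp add: spath_def)
    have "spath F ?qs" unfolding spath_def
    proof (intro conjI allI impI)
      show "distinct ?qs" using ps(1) False by (simp add: spath_def)
    next
      fix i assume i: "Suc i < length ?qs"
      show "{?qs ! i, ?qs ! Suc i} \<in> F"
      proof (cases "Suc i < length ps")
        case True
        then show ?thesis using ps(1) by (simp add: spath_def nth_append)
      next
        case False
        then have "i = length ps - 1" using i by simp
        moreover have "ps ! (length ps - 1) = x" using ps(3) ne by (simp add: last_conv_nth)
        ultimately show ?thesis using xy ne False i by (simp add: nth_append)
      qed
    qed simp
    moreover have "hd ?qs = u" using ps ne by simp
    moreover have "last ?qs = y" by simp
    ultimately show ?thesis by blast
  qed
qed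

lemma path_cycle:
  assumes "spath F ps" "hd ps = u" "last ps = w" "u \<noteq> w" "{u, w} \<notin> F" "F \<subseteq> E" "{u, w} \<in> E"
  shows "is_cycle E (cycle_edges ps) \<and> {u, w} \<in> cycle_edges ps"
proof -
  let ?k = "length ps"
  have ne: "ps \<noteq> []" and dis: "distinct ps"
    and ed: "\<And>i. Suc i < ?k \<Longrightarrow> {ps ! i, ps ! Suc i} \<in> F"
    using assms(1) by (auto simp: spath_def)
  have h0: "ps ! 0 = u" using assms(2) ne by (simp add: hd_conv_nth)
  have hl: "ps ! (?k - 1) = w" using assms(3) ne by (simp add: last_conv_nth)
  have k2: "?k \<ge> 2"
  proof (rule ccontr)
    assume "\<not> ?k \<ge> 2"
    moreover have "?k > 0" using ne by simp
    ultimately have "?k = 1" by arith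
    then show False using h0 hl assms(4) by simp
  qed
  have k3: "?k \<ge> 3"
  proof (rule ccontr)
    assume "\<not> ?k \<ge> 3"
    then have "?k = 2" using k2 by simp
    then have "{ps ! 0, ps ! Suc 0} \<in> F" using ed[of 0] by simp
    then show False using h0 hl \<open>?k = 2\<close> assms(5) by simp
  qed
  have sub: "cycle_edges ps \<subseteq> E"
  proof
    fix e assume "e \<in> cycle_edges ps"
    then obtain i where i: "i < ?k" "e = {ps ! i, ps ! ((i + 1) mod ?k)}"
      unfolding cycle_edges_def by blast
    show "e \<in> E"
    proof (cases "Suc i < ?k")
      case True
      then show ?thesis using i ed[of i] assms(6) by auto
    next
      case False
      then have "Suc i = ?k" using i by simp
      then have "i = ?k - 1" "(i + 1) mod ?k = 0" by auto
      then show ?thesis using i h0 hl assms(7) by (simp add: insert_commute)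
    qed
  qed
  have "{u, w} \<in> cycle_edges ps"
  proof -
    have "?k - 1 + 1 = ?k" using k3 by simp
    then have "(?k - 1 + 1) mod ?k = 0" by simp
    then have "{ps ! (?k - 1), ps ! ((?k - 1 + 1) mod ?k)} = {u, w}"
      using h0 hl by (simp add: insert_commute)
    moreover have "?k - 1 < ?k" using k3 by simp
    ultimately show ?thesis unfolding cycle_edges_def by blast
  qed
  then show ?thesis using sub dis k3 unfolding is_cycle_def by blast
qed



definition ce :: "'a list \<Rightarrow> nat \<Rightarrow> 'a set" where
  "ce vs i = {vs ! i, vs ! ((i + 1) mod length vs)}"

lemma cycle_edges_ce: "cycle_edges vs = ce vs ` {..<length vs}"
  unfolding cycle_edges_def ce_def by auto

lemma nxt_if: "i < k \<Longrightarrow> (i + 1) mod k = (if Suc i < k then Suc i else 0)"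
proof (cases "Suc i < k")
  case False
  assume "i < k"
  then have "Suc i = k" using False by simp
  then show ?thesis by simp
qed simp

lemma card_pair_int: "a \<noteq> b \<Longrightarrow> card ({a, b} \<inter> A) = 1 \<longleftrightarrow> (a \<in> A \<longleftrightarrow> b \<notin> A)"
  by (cases "a \<in> A"; cases "b \<in> A") auto

lemma around:
  assumes "i0 < k" "P i0"
    and step: "\<And>t. Suc t < k \<Longrightarrow> P ((i0 + t) mod k) \<Longrightarrow> P ((i0 + Suc t) mod k)"
    and "j < k"
  shows "P j"
proof -
  have all: "\<forall>t. t < k \<longrightarrow> P ((i0 + t) mod k)"
  proof (intro allI)
    fix t show "t < k \<longrightarrow> P ((i0 + t) mod k)"
    proof (induction t)
      case 0 then show ?case using assms by simp
    next
      case (Suc t) then show ?case using step by simp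
    qed
  qed
  have "(i0 + (j + k - i0)) = j + k" using assms(1) by simp
  then have "(i0 + (j + k - i0)) mod k = j" using assms(4) by simp
  moreover have "(j + k - i0) mod k < k" using assms(1) by simp
  ultimately show ?thesis using all[rule_format, of "(j + k - i0) mod k"]
    by (metis mod_add_right_eq)
qed

context
  fixes vs :: "'a list"
  assumes dis: "distinct vs" and k3: "3 \<le> length vs"
begin

lemma vne: "vs \<noteq> []" using k3 by auto

lemma nk: "(i + 1) mod length vs < length vs"
proof -
  have "0 < length vs" using k3 by linarith
  then show ?thesis by (rule mod_less_divisor)
qed

lemma lnz: "vs ! (length vs - 1) \<noteq> vs ! 0"
proof
  assume "vs ! (length vs - 1) = vs ! 0"
  moreover have "length vs - 1 < length vs" "0 < length vs" using k3 by auto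
  ultimately have "length vs - 1 = 0" using nth_eq_iff_index_eq[OF dis] by blast
  then show False using k3 by simp
qed

lemma nk': "Suc i mod length vs < length vs"
  using nk by simp

lemma ce_nxt: "Suc i < length vs \<Longrightarrow> ce vs i = {vs ! i, vs ! Suc i}"
  unfolding ce_def by simp

lemma ce_last: "ce vs (length vs - 1) = {vs ! (length vs - 1), vs ! 0}"
proof -
  have "length vs - 1 + 1 = length vs" using k3 by simp
  then show ?thesis unfolding ce_def by simp
qed

lemma ce_inj: "inj_on (ce vs) {..<length vs}"
proof (rule inj_onI)
  fix i j assume i: "i \<in> {..<length vs}" and j: "j \<in> {..<length vs}" and eq: "ce vs i = ce vs j"
  let ?k = "length vs"
  have ik: "i < ?k" and jk: "j < ?k" using i j by auto
  have ni: "(i + 1) mod ?k < ?k" and nj: "(j + 1) mod ?k < ?k" using nk by auto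
  from eq have "(vs ! i = vs ! j \<and> vs ! ((i + 1) mod ?k) = vs ! ((j + 1) mod ?k)) \<or>
      (vs ! i = vs ! ((j + 1) mod ?k) \<and> vs ! ((i + 1) mod ?k) = vs ! j)"
    unfolding ce_def doubleton_eq_iff .
  then show "i = j"
  proof
    assume "vs ! i = vs ! j \<and> vs ! ((i + 1) mod ?k) = vs ! ((j + 1) mod ?k)"
    then show ?thesis using nth_eq_iff_index_eq[OF dis ik jk] by blast
  next
    assume h: "vs ! i = vs ! ((j + 1) mod ?k) \<and> vs ! ((i + 1) mod ?k) = vs ! j"
    then have a: "i = (j + 1) mod ?k" using nth_eq_iff_index_eq[OF dis ik nj] by blast
    have b: "(i + 1) mod ?k = j" using h nth_eq_iff_index_eq[OF dis ni jk] by blast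
    have A: "i = (if Suc j < ?k then Suc j else 0)" using trans[OF a nxt_if[OF jk]] .
    have B: "j = (if Suc i < ?k then Suc i else 0)" using trans[OF sym[OF b] nxt_if[OF ik]] .
    show ?thesis
    proof (cases "Suc j < ?k")
      case T1: True
      note i1 = A[unfolded if_P[OF T1]]
      show ?thesis
      proof (cases "Suc i < ?k")
        case T2: True
        note j1 = B[unfolded if_P[OF T2]]
        show ?thesis using i1 j1 by linarith
      next
        case F2: False
        note j1 = B[unfolded if_not_P[OF F2]]
        show ?thesis using i1 j1 F2 k3 by linarith
      qed
    next
      case F1: False
      note i1 = A[unfolded if_not_P[OF F1]]
      have T2: "Suc i < ?k" using i1 k3 by linarith
      note j1 = B[unfolded if_P[OF T2]]
      show ?thesis using i1 j1 F1 k3 by linarith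
    qed
  qed
qed

lemma card_ce: "card (cycle_edges vs) = length vs"
  using ce_inj by (simp add: cycle_edges_ce card_image)

lemma ce_sub: "i < length vs \<Longrightarrow> ce vs i \<subseteq> set vs"
  unfolding ce_def using nk' by auto

lemma ce_sub_all: "e \<in> cycle_edges vs \<Longrightarrow> e \<subseteq> set vs"
  unfolding cycle_edges_ce using ce_sub by auto

lemma ce_two: "i < length vs \<Longrightarrow> vs ! i \<noteq> vs ! ((i + 1) mod length vs)"
proof
  assume i: "i < length vs" and "vs ! i = vs ! ((i + 1) mod length vs)"
  then have "i = (i + 1) mod length vs" using nth_eq_iff_index_eq[OF dis i nk[of i]] by blast
  then have h: "i = (if Suc i < length vs then Suc i else 0)" using nxt_if[OF i] by (rule trans)
  show False
  proof (cases "Suc i < length vs")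
    case True
    show False using h[unfolded if_P[OF True]] by linarith
  next
    case False
    show False using h[unfolded if_not_P[OF False]] False k3 by linarith
  qed
qed

lemma cycle_simple: "simple_graph (set vs) (cycle_edges vs)"
  unfolding simple_graph_def cycle_edges_ce
proof
  fix e assume "e \<in> ce vs ` {..<length vs}"
  then obtain i where i: "i < length vs" "e = ce vs i" by auto
  show "\<exists>u v. u \<in> set vs \<and> v \<in> set vs \<and> u \<noteq> v \<and> e = {u, v}"
  proof (intro exI conjI)
    show "vs ! i \<in> set vs" using i(1) by simp
    show "vs ! ((i + 1) mod length vs) \<in> set vs" using nk[of i] by simp
    show "vs ! i \<noteq> vs ! ((i + 1) mod length vs)" using ce_two[OF i(1)] .
    show "e = {vs ! i, vs ! ((i + 1) mod length vs)}" using i(2) unfolding ce_def .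
  qed
qed

lemma deg_cycle: "card {e \<in> cycle_edges vs. x \<in> e} = (if x \<in> set vs then 2 else 0)"
proof (cases "x \<in> set vs")
  case False
  then have "{e \<in> cycle_edges vs. x \<in> e} = {}"
    using ce_sub_all by blast
  then show ?thesis using False by (metis card.empty)
next
  case True
  let ?k = "length vs"
  obtain p where p: "p < ?k" "vs ! p = x" using True by (auto simp: in_set_conv_nth)
  define q where "q = (if p = 0 then ?k - 1 else p - 1)"
  have q: "q < ?k" "(q + 1) mod ?k = p" "q \<noteq> p"
  proof -
    show "q < ?k" using p k3 vne unfolding q_def by (cases "p = 0") (simp_all add: less_imp_diff_less)
    show "q \<noteq> p"
    proof (cases "p = 0")
      case True then show ?thesis unfolding q_def using k3 by simp
    next
      case False then show ?thesis unfolding q_def by simp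
    qed
    show "(q + 1) mod ?k = p"
    proof (cases "p = 0")
      case True
      then have "q + 1 = ?k" unfolding q_def using k3 by simp
      then show ?thesis using True by simp
    next
      case False
      then have "q + 1 = p" unfolding q_def by simp
      then show ?thesis using p by simp
    qed
  qed
  have idx: "{i. i < ?k \<and> x \<in> ce vs i} = {p, q}"
  proof (intro set_eqI iffI)
    fix i assume "i \<in> {i. i < ?k \<and> x \<in> ce vs i}"
    then have i: "i < ?k" "vs ! i = x \<or> vs ! ((i + 1) mod ?k) = x" unfolding ce_def by auto
    have ni: "(i + 1) mod ?k < ?k" using nk by simp
    show "i \<in> {p, q}"
    proof (cases "vs ! i = x")
      case True then show ?thesis using i p dis by (auto simp: nth_eq_iff_index_eq)
    next
      case False
      then have "(i + 1) mod ?k = p" using i p dis ni by (auto simp: nth_eq_iff_index_eq)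
      then have ip: "(if Suc i < ?k then Suc i else 0) = p" using nxt_if[OF i(1)] by simp
      have "i = q"
      proof (cases "Suc i < ?k")
        case True
        then have "Suc i = p" using ip by simp
        then show ?thesis unfolding q_def by simp
      next
        case False
        then have "p = 0" "i = ?k - 1" using ip i(1) by auto
        then show ?thesis unfolding q_def by simp
      qed
      then show ?thesis by simp
    qed
  next
    fix i assume "i \<in> {p, q}"
    then show "i \<in> {i. i < ?k \<and> x \<in> ce vs i}" using p q unfolding ce_def by auto
  qed
  have "{e \<in> cycle_edges vs. x \<in> e} = ce vs ` {i. i < ?k \<and> x \<in> ce vs i}"
    unfolding cycle_edges_ce by auto
  also have "\<dots> = ce vs ` {p, q}" using idx by simp
  finally have "card {e \<in> cycle_edges vs. x \<in> e} = card (ce vs ` {p, q})" by simp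
  also have "\<dots> = card {p, q}"
    by (rule card_image, rule inj_on_subset[OF ce_inj]) (use p q in auto)
  also have "\<dots> = 2" using q by simp
  finally show ?thesis using True by simp
qed

lemma even_cycle:
  assumes A: "\<forall>e\<in>cycle_edges vs. card (e \<inter> A) = 1"
  shows "even (length vs)"
proof -
  let ?k = "length vs"
  let ?P = "\<lambda>j. vs ! j \<in> A"
  have st: "?P (Suc j) \<longleftrightarrow> \<not> ?P j" if "Suc j < ?k" for j
  proof -
    have "ce vs j \<in> cycle_edges vs" using that unfolding cycle_edges_ce by auto
    then have c: "card ({vs ! j, vs ! Suc j} \<inter> A) = 1" using A ce_nxt[OF that] by simp
    have n: "vs ! j \<noteq> vs ! Suc j" using that nth_eq_iff_index_eq[OF dis, of j "Suc j"] by simp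
    show ?thesis using iffD1[OF card_pair_int[OF n] c] by blast
  qed
  have all: "j < ?k \<longrightarrow> (?P j \<longleftrightarrow> (?P 0 \<longleftrightarrow> even j))" for j
  proof (induction j)
    case 0 then show ?case by simp
  next
    case (Suc j) then show ?case using st[of j] by auto
  qed
  have "ce vs (?k - 1) \<in> cycle_edges vs" using k3 unfolding cycle_edges_ce by auto
  then have c: "card ({vs ! (?k - 1), vs ! 0} \<inter> A) = 1" using A ce_last by simp
  have "?P (?k - 1) \<longleftrightarrow> \<not> ?P 0" using iffD1[OF card_pair_int[OF lnz] c] by blast
  moreover have "?P (?k - 1) \<longleftrightarrow> (?P 0 \<longleftrightarrow> even (?k - 1))" using all[of "?k - 1"] k3 by simp
  ultimately have "\<not> even (?k - 1)" by blast
  then show ?thesis using k3 by presburger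
qed

lemma cycle_bip:
  assumes "even (length vs)"
  shows "bipartite (set vs) (cycle_edges vs)"
proof -
  let ?k = "length vs"
  define A where "A = {vs ! i | i. i < ?k \<and> even i}"
  have memA: "vs ! j \<in> A \<longleftrightarrow> even j" if j: "j < ?k" for j
  proof
    assume "vs ! j \<in> A"
    then obtain i where i: "vs ! j = vs ! i" "i < ?k" "even i" unfolding A_def by blast
    then have "j = i" using nth_eq_iff_index_eq[OF dis j i(2)] by blast
    then show "even j" using i by simp
  next
    assume "even j" then show "vs ! j \<in> A" unfolding A_def using j by blast
  qed
  have "A \<subseteq> set vs" unfolding A_def by auto
  moreover have "\<forall>e\<in>cycle_edges vs. card (e \<inter> A) = 1"
  proof
    fix e assume "e \<in> cycle_edges vs"
    then obtain i where i: "i < ?k" "e = ce vs i" unfolding cycle_edges_ce by auto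
    show "card (e \<inter> A) = 1"
    proof (cases "Suc i < ?k")
      case True
      then have "e = {vs ! i, vs ! Suc i}" using i ce_nxt by simp
      moreover have n: "vs ! i \<noteq> vs ! Suc i" using True nth_eq_iff_index_eq[OF dis, of i "Suc i"] by simp
      moreover have "vs ! i \<in> A \<longleftrightarrow> vs ! Suc i \<notin> A" using memA[of i] memA[of "Suc i"] True i by simp
      ultimately show ?thesis using card_pair_int[OF n] by simp
    next
      case False
      then have "i = ?k - 1" using i by simp
      then have ee: "e = {vs ! (?k - 1), vs ! 0}" using i ce_last by simp
      moreover have "\<not> even (?k - 1)" using assms k3 by presburger
      moreover have "0 < ?k" "?k - 1 < ?k" using k3 by auto
      ultimately have "vs ! (?k - 1) \<in> A \<longleftrightarrow> vs ! 0 \<notin> A" using memA[of "?k - 1"] memA[of 0] by simp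
      then show ?thesis using card_pair_int[OF lnz] ee by simp
    qed
  qed
  ultimately show ?thesis unfolding bipartite_def by blast
qed

lemma chain:
  assumes "a \<le> b" "b < length vs" "\<And>i. a \<le> i \<Longrightarrow> i < b \<Longrightarrow> ce vs i \<in> F"
  shows "reachable F (vs ! a) (vs ! b)"
  using assms
proof (induction b)
  case 0 then show ?case by (simp add: reach_refl)
next
  case (Suc b)
  show ?case
  proof (cases "a = Suc b")
    case True then show ?thesis by (simp add: reach_refl)
  next
    case False
    then have "reachable F (vs ! a) (vs ! b)" using Suc by auto
    moreover have "ce vs b \<in> F" using Suc False by auto
    then have "reachable F (vs ! b) (vs ! Suc b)" using ce_nxt[of b] Suc by (simp add: reach_edge)
    ultimately show ?thesis by (rule reach_trans)
  qed
qed

lemma cycle_minus_conn: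
  assumes j: "j < length vs"
  shows "connected_graph (set vs) (cycle_edges vs - {ce vs j})"
proof -
  let ?k = "length vs"
  let ?F = "cycle_edges vs - {ce vs j}"
  have inF: "ce vs i \<in> ?F" if "i < ?k" "i \<noteq> j" for i
    using that j ce_inj unfolding cycle_edges_ce by (auto dest: inj_onD)
  have toj: "reachable ?F (vs ! i) (vs ! j)" if i: "i < ?k" for i
  proof (cases "i \<le> j")
    case True
    then show ?thesis using chain[of i j ?F] inF j by auto
  next
    case False
    have r1: "reachable ?F (vs ! i) (vs ! (?k - 1))"
      using chain[of i "?k - 1" ?F] inF i False by auto
    have "ce vs (?k - 1) \<in> ?F" using inF[of "?k - 1"] False i by auto
    then have r2: "reachable ?F (vs ! (?k - 1)) (vs ! 0)" using ce_last by (simp add: reach_edge)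
    have r3: "reachable ?F (vs ! 0) (vs ! j)" using chain[of 0 j ?F] inF j by auto
    show ?thesis using r1 r2 r3 by (blast intro: reach_trans)
  qed
  show ?thesis unfolding connected_graph_def
  proof (intro ballI)
    fix u w assume "u \<in> set vs" "w \<in> set vs"
    then obtain a b where "a < ?k" "u = vs ! a" "b < ?k" "w = vs ! b" by (auto simp: in_set_conv_nth)
    then show "reachable ?F u w" using toj by (blast intro: reach_trans reach_sym)
  qed
qed

lemma cycle_conn: "connected_graph (set vs) (cycle_edges vs)"
  using cycle_minus_conn[of 0] k3 unfolding connected_graph_def
  by (meson Diff_subset reach_mono less_le_trans zero_less_numeral)

lemma cycle_bridgeless: "bridgeless (set vs) (cycle_edges vs)"
  unfolding bridgeless_def
proof
  fix e assume "e \<in> cycle_edges vs"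
  then obtain j where "j < length vs" "e = ce vs j" unfolding cycle_edges_ce by auto
  then show "connected_graph (set vs) (cycle_edges vs - {e})" using cycle_minus_conn by simp
qed

end

lemma cycle_sub_eq:
  assumes dis: "distinct vs" and k3: "3 \<le> length vs" and cyc: "is_cycle (cycle_edges vs) C"
  shows "C = cycle_edges vs"
proof -
  let ?k = "length vs"
  let ?C = "cycle_edges vs"
  obtain ws where ws: "distinct ws" "3 \<le> length ws" "C = cycle_edges ws" "C \<subseteq> ?C"
    using cyc unfolding is_cycle_def by blast
  have fin: "finite ?C" unfolding cycle_edges_ce by simp
  let ?P = "\<lambda>i. ce vs i \<in> C"
  have step: "?P ((i + 1) mod ?k)" if i: "i < ?k" "?P i" for i
  proof -
    let ?y = "vs ! ((i + 1) mod ?k)"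
    have "?y \<in> ce vs i" unfolding ce_def by simp
    then have yw: "?y \<in> set ws" using i(2) ws(3) ce_sub[OF ws(1,2)] unfolding cycle_edges_ce by blast
    have yv: "?y \<in> set vs" using nk[OF dis k3, of i] by simp
    have sub: "{e \<in> C. ?y \<in> e} \<subseteq> {e \<in> ?C. ?y \<in> e}" using ws(4) by auto
    have "card {e \<in> C. ?y \<in> e} = 2" using deg_cycle[OF ws(1,2)] yw ws(3) by simp
    moreover have "card {e \<in> ?C. ?y \<in> e} = 2" using deg_cycle[OF dis k3] yv by simp
    ultimately have eq: "{e \<in> C. ?y \<in> e} = {e \<in> ?C. ?y \<in> e}"
      using card_subset_eq[OF _ sub] fin by simp
    have "(i + 1) mod ?k < ?k" using nk[OF dis k3] by simp
    then have "ce vs ((i + 1) mod ?k) \<in> {e \<in> ?C. ?y \<in> e}"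
      unfolding cycle_edges_ce ce_def by auto
    then show ?thesis using eq by blast
  qed
  have "ce ws 0 \<in> C" using ws(2,3) unfolding cycle_edges_ce by auto
  then obtain e0 where "e0 \<in> C" by blast
  then obtain i0 where i0: "i0 < ?k" "?P i0" using ws(4) unfolding cycle_edges_ce by auto
  have "?P j" if "j < ?k" for j
  proof (rule around[of i0 ?k ?P j, OF i0 _ that])
    fix t assume "Suc t < ?k" "?P ((i0 + t) mod ?k)"
    moreover have "(i0 + t) mod ?k < ?k" using k3 by (intro mod_less_divisor) linarith
    ultimately have "?P (((i0 + t) mod ?k + 1) mod ?k)" using step by blast
    then show "?P ((i0 + Suc t) mod ?k)" by (simp add: mod_Suc_eq)
  qed
  then have "?C \<subseteq> C" unfolding cycle_edges_ce by auto
  then show ?thesis using ws(4) by blast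
qed



definition cactus_cond :: "'a set set \<Rightarrow> bool" where
  "cactus_cond E \<longleftrightarrow> (\<forall>e\<in>E. \<forall>C1 C2. is_cycle E C1 \<and> is_cycle E C2 \<and> e \<in> C1 \<and> e \<in> C2 \<longrightarrow> C1 = C2)"

lemma cactus_iff: "cactus V E \<longleftrightarrow> simple_graph V E \<and> connected_graph V E \<and> cactus_cond E"
  unfolding cactus_def cactus_cond_def by (rule refl)

lemma sg_sub: "simple_graph V E \<Longrightarrow> e \<in> E \<Longrightarrow> e \<subseteq> V"
  unfolding simple_graph_def by fastforce

lemma sg_fin: "simple_graph V E \<Longrightarrow> finite V \<Longrightarrow> finite E"
  by (rule finite_subset[of E "Pow V"]) (auto dest: sg_sub)

lemma sg_card2: "simple_graph V E \<Longrightarrow> e \<in> E \<Longrightarrow> card e = 2"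
  unfolding simple_graph_def by fastforce

lemma mod_ne_self:
  fixes p k s :: nat
  assumes "p < k" "0 < s" "s < k"
  shows "(p + s) mod k \<noteq> p"
proof (cases "p + s < k")
  case True
  then have "(p + s) mod k = p + s" by (rule mod_less)
  then show ?thesis using assms by simp
next
  case False
  then have "(p + s) mod k = (p + s - k) mod k" by (simp add: le_mod_geq)
  also have "\<dots> = p + s - k" using assms by simp
  finally show ?thesis using assms False by arith
qed

context
  fixes V1 V2 :: "'a set" and E1 E2 :: "'a set set" and v :: 'a
  assumes sg1: "simple_graph V1 E1" and sg2: "simple_graph V2 E2" and int: "V1 \<inter> V2 = {v}"
begin

lemma glue_disj: "E1 \<inter> E2 = {}"
proof (rule ccontr)
  assume "E1 \<inter> E2 \<noteq> {}"
  then obtain e where e: "e \<in> E1" "e \<in> E2" by blast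
  have "e \<subseteq> V1" "e \<subseteq> V2" using e sg_sub sg1 sg2 by auto
  then have "e \<subseteq> {v}" using int by blast
  then have "card e \<le> card {v}" by (intro card_mono) auto
  moreover have "card e = 2" using sg_card2[OF sg1 e(1)] .
  ultimately show False by simp
qed

lemma glue_simple: "simple_graph (V1 \<union> V2) (E1 \<union> E2)"
  unfolding simple_graph_def
proof
  fix e assume "e \<in> E1 \<union> E2"
  then obtain u w where "u \<in> V1 \<and> w \<in> V1 \<or> u \<in> V2 \<and> w \<in> V2" "u \<noteq> w" "e = {u, w}"
    using sg1 sg2 unfolding simple_graph_def by (metis UnE)
  then show "\<exists>u w. u \<in> V1 \<union> V2 \<and> w \<in> V1 \<union> V2 \<and> u \<noteq> w \<and> e = {u, w}"
    by (intro exI[of _ u] exI[of _ w]) auto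
qed

lemma glue_deg:
  assumes "finite V1" "finite V2"
  shows "card {e \<in> E1 \<union> E2. x \<in> e} = card {e \<in> E1. x \<in> e} + card {e \<in> E2. x \<in> e}"
proof -
  have "{e \<in> E1 \<union> E2. x \<in> e} = {e \<in> E1. x \<in> e} \<union> {e \<in> E2. x \<in> e}" by auto
  moreover have "finite E1" "finite E2" using sg_fin sg1 sg2 assms by auto
  ultimately show ?thesis using glue_disj by (simp add: card_Un_disjoint disjoint_iff)
qed

lemma glue_conn:
  assumes "connected_graph V1 F1" "connected_graph V2 F2"
  shows "connected_graph (V1 \<union> V2) (F1 \<union> F2)"
proof -
  have v1: "v \<in> V1" and v2: "v \<in> V2" using int by auto
  have r1: "reachable (F1 \<union> F2) u v" if "u \<in> V1 \<union> V2" for u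
    using that assms v1 v2 unfolding connected_graph_def
    by (meson Un_iff reach_mono sup_ge1 sup_ge2)
  show ?thesis unfolding connected_graph_def
    using r1 by (blast intro: reach_trans reach_sym)
qed

lemma glue_bridgeless:
  assumes "connected_graph V1 E1" "connected_graph V2 E2" "bridgeless V1 E1" "bridgeless V2 E2"
  shows "bridgeless (V1 \<union> V2) (E1 \<union> E2)"
  unfolding bridgeless_def
proof
  fix e assume e: "e \<in> E1 \<union> E2"
  show "connected_graph (V1 \<union> V2) (E1 \<union> E2 - {e})"
  proof (cases "e \<in> E1")
    case True
    then have "e \<notin> E2" using glue_disj by auto
    then have "E1 \<union> E2 - {e} = (E1 - {e}) \<union> E2" by auto
    then show ?thesis using glue_conn[of "E1 - {e}" E2] assms True unfolding bridgeless_def by simp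
  next
    case False
    then have "e \<in> E2" using e by simp
    have "E1 \<union> E2 - {e} = E1 \<union> (E2 - {e})" using False by auto
    then show ?thesis using glue_conn[of E1 "E2 - {e}"] assms \<open>e \<in> E2\<close>
      unfolding bridgeless_def by simp
  qed
qed

lemma glue_bip:
  assumes "bipartite V1 E1" "bipartite V2 E2"
  shows "bipartite (V1 \<union> V2) (E1 \<union> E2)"
proof -
  obtain A1 where A1: "A1 \<subseteq> V1" "\<forall>e\<in>E1. card (e \<inter> A1) = 1" using assms(1) unfolding bipartite_def by blast
  obtain A2 where A2: "A2 \<subseteq> V2" "\<forall>e\<in>E2. card (e \<inter> A2) = 1" using assms(2) unfolding bipartite_def by blast
  define B where "B = (if (v \<in> A1 \<longleftrightarrow> v \<in> A2) then A2 else V2 - A2)"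
  have B: "B \<subseteq> V2" "v \<in> B \<longleftrightarrow> v \<in> A1" unfolding B_def using A2 int by auto
  have B2: "\<forall>e\<in>E2. card (e \<inter> B) = 1"
  proof
    fix e assume e: "e \<in> E2"
    show "card (e \<inter> B) = 1"
    proof (cases "v \<in> A1 \<longleftrightarrow> v \<in> A2")
      case True then show ?thesis using A2 e unfolding B_def by simp
    next
      case False
      obtain a b where ab: "e = {a, b}" "a \<noteq> b" "a \<in> V2" "b \<in> V2" using e sg2 unfolding simple_graph_def by blast
      have "card (e \<inter> A2) = 1" using A2 e by simp
      then have "a \<in> A2 \<longleftrightarrow> b \<notin> A2" using ab card_pair_int by metis
      then have "a \<in> V2 - A2 \<longleftrightarrow> b \<notin> V2 - A2" using ab by auto
      then show ?thesis using False ab card_pair_int[of a b "V2 - A2"] unfolding B_def by simp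
    qed
  qed
  define A where "A = A1 \<union> B"
  have "A \<subseteq> V1 \<union> V2" using A1 B unfolding A_def by auto
  moreover have "\<forall>e\<in>E1 \<union> E2. card (e \<inter> A) = 1"
  proof
    fix e assume "e \<in> E1 \<union> E2"
    then show "card (e \<inter> A) = 1"
    proof
      assume e: "e \<in> E1"
      then have "e \<subseteq> V1" using sg1 sg_sub by blast
      then have "e \<inter> A = e \<inter> A1" unfolding A_def using int B by auto
      then show ?thesis using A1 e by simp
    next
      assume e: "e \<in> E2"
      then have "e \<subseteq> V2" using sg2 sg_sub by blast
      then have "e \<inter> A = e \<inter> B" unfolding A_def using int A1 B by auto
      then show ?thesis using B2 e by simp
    qed
  qed
  ultimately show ?thesis unfolding bipartite_def by blast
qed

end

lemma glue_prop:
  assumes sga: "simple_graph Va Ea" and sgb: "simple_graph Vb Eb" and int: "Va \<inter> Vb = {v}"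
    and dis: "distinct ws" and k3: "3 \<le> length ws" and sub: "cycle_edges ws \<subseteq> Ea \<union> Eb"
    and p: "p < length ws" "v \<in> set ws \<longrightarrow> ws ! p = v" and pa: "ce ws p \<in> Ea"
  shows "cycle_edges ws \<subseteq> Ea"
proof -
  let ?k = "length ws"
  have "ce ws j \<in> Ea" if j: "j < ?k" for j
  proof (rule around[of p ?k "\<lambda>i. ce ws i \<in> Ea" j, OF p(1) pa _ j])
    fix t assume t: "Suc t < ?k" "ce ws ((p + t) mod ?k) \<in> Ea"
    let ?i = "(p + t) mod ?k"
    let ?j = "(p + Suc t) mod ?k"
    have jeq: "?j = (?i + 1) mod ?k" by (simp add: mod_Suc_eq)
    have jk: "?j < ?k" using k3 by (intro mod_less_divisor) linarith
    have "ws ! ?j \<in> ce ws ?i" unfolding ce_def jeq by simp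
    then have yV: "ws ! ?j \<in> Va" using t(2) sga sg_sub by blast
    have "ws ! ?j \<noteq> v"
    proof
      assume "ws ! ?j = v"
      then have "v \<in> set ws" using jk by auto
      then have "ws ! p = ws ! ?j" using p \<open>ws ! ?j = v\<close> by simp
      then have "p = ?j" using nth_eq_iff_index_eq[OF dis p(1) jk] by blast
      moreover have "?j \<noteq> p" using mod_ne_self[of p ?k "Suc t"] p t by simp
      ultimately show False by simp
    qed
    then have ynb: "ws ! ?j \<notin> Vb" using yV int by auto
    have "ce ws ?j \<in> Ea \<union> Eb" using sub jk unfolding cycle_edges_ce by auto
    moreover have "ws ! ?j \<in> ce ws ?j" unfolding ce_def by simp
    ultimately show "ce ws ?j \<in> Ea" using ynb sgb sg_sub by blast
  qed
  then show ?thesis unfolding cycle_edges_ce by auto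
qed

lemma glue_cycle:
  assumes sg1: "simple_graph V1 E1" and sg2: "simple_graph V2 E2" and int: "V1 \<inter> V2 = {v}"
    and cyc: "is_cycle (E1 \<union> E2) C"
  shows "is_cycle E1 C \<or> is_cycle E2 C"
proof -
  obtain ws where ws: "distinct ws" "3 \<le> length ws" "C = cycle_edges ws" "C \<subseteq> E1 \<union> E2"
    using cyc unfolding is_cycle_def by blast
  obtain p where p: "p < length ws" "v \<in> set ws \<longrightarrow> ws ! p = v"
  proof (cases "v \<in> set ws")
    case True
    then obtain q where "q < length ws" "ws ! q = v" by (auto simp: in_set_conv_nth)
    then show ?thesis using that by blast
  next
    case False
    show ?thesis by (rule that[of 0]) (use ws(2) False in auto)
  qed
  have "ce ws p \<in> C" using ws(3) p(1) unfolding cycle_edges_ce by auto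
  then have "ce ws p \<in> E1 \<or> ce ws p \<in> E2" using ws(4) by auto
  then show ?thesis
  proof
    assume "ce ws p \<in> E1"
    then have "C \<subseteq> E1" using glue_prop[OF sg1 sg2 int ws(1,2) _ p] ws by simp
    then show ?thesis using ws unfolding is_cycle_def by blast
  next
    assume "ce ws p \<in> E2"
    moreover have "V2 \<inter> V1 = {v}" using int by auto
    ultimately have "C \<subseteq> E2" using glue_prop[OF sg2 sg1 _ ws(1,2) _ p] ws by (simp add: Un_commute)
    then show ?thesis using ws unfolding is_cycle_def by blast
  qed
qed

lemma glue_cactus:
  assumes sg1: "simple_graph V1 E1" and sg2: "simple_graph V2 E2" and int: "V1 \<inter> V2 = {v}"
    and c1: "cactus_cond E1" and c2: "cactus_cond E2"
  shows "cactus_cond (E1 \<union> E2)"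
  unfolding cactus_cond_def
proof (intro ballI allI impI)
  fix e C1 C2 assume e: "e \<in> E1 \<union> E2" and h: "is_cycle (E1 \<union> E2) C1 \<and> is_cycle (E1 \<union> E2) C2 \<and> e \<in> C1 \<and> e \<in> C2"
  have d: "E1 \<inter> E2 = {}" using glue_disj[OF sg1 sg2 int] .
  have s1: "is_cycle E1 C1 \<or> is_cycle E2 C1" using glue_cycle[OF sg1 sg2 int] h by blast
  have s2: "is_cycle E1 C2 \<or> is_cycle E2 C2" using glue_cycle[OF sg1 sg2 int] h by blast
  have sub: "is_cycle E C \<Longrightarrow> C \<subseteq> E" for E C :: "'a set set" unfolding is_cycle_def by blast
  show "C1 = C2"
    using s1 s2
  proof (elim disjE)
    assume "is_cycle E1 C1" "is_cycle E1 C2"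
    then show ?thesis using c1 h sub unfolding cactus_cond_def by blast
  next
    assume "is_cycle E2 C1" "is_cycle E2 C2"
    then show ?thesis using c2 h sub unfolding cactus_cond_def by blast
  next
    assume "is_cycle E1 C1" "is_cycle E2 C2"
    then show ?thesis using d h sub by blast
  next
    assume "is_cycle E2 C1" "is_cycle E1 C2"
    then show ?thesis using d h sub by blast
  qed
qed



lemma deg_out: "simple_graph V E \<Longrightarrow> x \<notin> V \<Longrightarrow> card {e \<in> E. x \<in> e} = 0"
proof -
  assume sg: "simple_graph V E" and x: "x \<notin> V"
  have "{e \<in> E. x \<in> e} = {}" using sg_sub[OF sg] x by blast
  then show ?thesis by (metis card.empty)
qed

definition good :: "'a set \<Rightarrow> 'a set set \<Rightarrow> bool" where
  "good V E \<longleftrightarrow> simple_graph V E \<and> connected_graph V E \<and> bridgeless V E \<and> bipartite V E \<and> cactus_cond E"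

lemma cycle_good:
  assumes dis: "distinct vs" and k3: "3 \<le> length vs" and ev: "even (length vs)"
  shows "good (set vs) (cycle_edges vs)"
proof -
  have "cactus_cond (cycle_edges vs)"
    unfolding cactus_cond_def
  proof (intro ballI allI impI)
    fix e C1 C2 assume "is_cycle (cycle_edges vs) C1 \<and> is_cycle (cycle_edges vs) C2 \<and> e \<in> C1 \<and> e \<in> C2"
    then have "C1 = cycle_edges vs" "C2 = cycle_edges vs" using cycle_sub_eq[OF dis k3] by blast+
    then show "C1 = C2" by simp
  qed
  then show ?thesis unfolding good_def
    using cycle_simple[OF dis k3] cycle_conn[OF dis k3] cycle_bridgeless[OF dis k3] cycle_bip[OF dis k3 ev]
    by blast
qed

lemma glue_good:
  assumes g1: "good V1 E1" and g2: "good V2 E2" and int: "V1 \<inter> V2 = {v}"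
  shows "good (V1 \<union> V2) (E1 \<union> E2)"
proof -
  have sg1: "simple_graph V1 E1" and sg2: "simple_graph V2 E2" using g1 g2 unfolding good_def by auto
  show ?thesis unfolding good_def
  proof (intro conjI)
    show "simple_graph (V1 \<union> V2) (E1 \<union> E2)" using glue_simple[OF sg1 sg2 int] .
    show "connected_graph (V1 \<union> V2) (E1 \<union> E2)" using glue_conn[OF sg1 sg2 int] g1 g2 unfolding good_def by blast
    show "bridgeless (V1 \<union> V2) (E1 \<union> E2)" using glue_bridgeless[OF sg1 sg2 int] g1 g2 unfolding good_def by blast
    show "bipartite (V1 \<union> V2) (E1 \<union> E2)" using glue_bip[OF sg1 sg2 int] g1 g2 unfolding good_def by blast
    show "cactus_cond (E1 \<union> E2)" using glue_cactus[OF sg1 sg2 int] g1 g2 unfolding good_def by blast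
  qed
qed

lemma suff:
  fixes V :: "'a set" and d :: "'a \<Rightarrow> nat"
  assumes "finite V" "V \<noteq> {}" "\<forall>x\<in>V. even (d x) \<and> 2 \<le> d x" "4 dvd (\<Sum>x\<in>V. d x)"
    "3 * (\<Sum>x\<in>V. d x) \<le> 8 * (card V - 1)"
  shows "\<exists>E. good V E \<and> (\<forall>x\<in>V. card {e \<in> E. x \<in> e} = d x)"
  using assms
proof (induction "card V" arbitrary: V d rule: less_induct)
  case less
  note fin = less.prems(1) and ne = less.prems(2) and dv = less.prems(3)
    and d4 = less.prems(4) and bnd = less.prems(5)
  let ?n = "card V"
  let ?S = "\<Sum>x\<in>V. d x"
  show ?case
  proof (cases "\<forall>x\<in>V. d x = 2")
    case True
    have S: "?S = 2 * ?n" using True by simp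
    have n1: "?n \<ge> 1" using fin ne by (simp add: Suc_leI card_gt_0_iff)
    have n4: "?n \<ge> 4" using bnd S n1 by linarith
    have evn: "even ?n" using d4 S by presburger
    obtain vs where vs: "set vs = V" "distinct vs" using finite_distinct_list[OF fin] by blast
    have len: "length vs = ?n" using vs distinct_card by fastforce
    have k3: "3 \<le> length vs" using len n4 by simp
    have g: "good V (cycle_edges vs)" using cycle_good[OF vs(2) k3] len evn vs(1) by simp
    have "\<forall>x\<in>V. card {e \<in> cycle_edges vs. x \<in> e} = d x"
      using deg_cycle[OF vs(2) k3] vs(1) True by simp
    then show ?thesis using g by blast
  next
    case False
    then obtain v where v: "v \<in> V" "d v \<noteq> 2" by blast
    have "even (d v)" "2 \<le> d v" using dv v by auto
    then have dv4: "d v \<ge> 4" using v(2) by presburger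
    define T where "T = {x \<in> V. d x = 2}"
    have vT: "v \<notin> T" using v unfolding T_def by simp
    have TV: "T \<subseteq> V" unfolding T_def by auto
    have finT: "finite T" using TV fin finite_subset by blast
    have sT: "(\<Sum>x\<in>T. d x) = 2 * card T" unfolding T_def by simp
    have sR: "(\<Sum>x\<in>V - T. d x) \<ge> 4 * card (V - T)"
    proof -
      have "\<forall>x\<in>V - T. 4 \<le> d x"
      proof
        fix x assume "x \<in> V - T"
        then have "even (d x)" "2 \<le> d x" "d x \<noteq> 2" using dv unfolding T_def by auto
        then show "4 \<le> d x" by presburger
      qed
      then have "(\<Sum>x\<in>V - T. (4::nat)) \<le> (\<Sum>x\<in>V - T. d x)" by (intro sum_mono) auto
      then show ?thesis by simp
    qed
    have Ssplit: "?S = (\<Sum>x\<in>V - T. d x) + (\<Sum>x\<in>T. d x)" using sum.subset_diff[OF TV fin] .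
    have ncard: "?n = card (V - T) + card T" using card_Diff_subset[OF finT TV] card_mono[OF fin TV] by simp
    have R1: "card (V - T) \<ge> 1" using v vT fin by (metis DiffI card_0_eq finite_Diff empty_iff less_one not_le)
    have T4: "card T \<ge> 4" using bnd Ssplit sT sR ncard R1 by linarith
    obtain T3 where T3: "T3 \<subseteq> T" "card T3 = 3" using obtain_subset_with_card_n[of 3 T] T4 by auto
    then obtain a b c where abc: "T3 = {a, b, c}" "a \<noteq> b" "b \<noteq> c" "a \<noteq> c"
      unfolding card_3_iff by blast
    have abcT: "a \<in> T" "b \<in> T" "c \<in> T" using T3 abc by auto
    have abcV: "a \<in> V" "b \<in> V" "c \<in> V" using abcT TV by auto
    have dabc: "d a = 2" "d b = 2" "d c = 2" using abcT unfolding T_def by auto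
    have vabc: "v \<noteq> a" "v \<noteq> b" "v \<noteq> c" using abcT vT by auto
    define V' where "V' = V - {a, b, c}"
    define d' where "d' = d(v := d v - 2)"
    have vV': "v \<in> V'" unfolding V'_def using v vabc by simp
    have finV': "finite V'" unfolding V'_def using fin by simp
    have cardV': "card V' = ?n - 3"
    proof -
      have "card V' = card V - card {a, b, c}" unfolding V'_def
        using abcV fin by (intro card_Diff_subset) auto
      then show ?thesis using abc by simp
    qed
    have n5: "?n \<ge> 5" using ncard R1 T4 by linarith
    have S1: "?S = (\<Sum>x\<in>V'. d x) + 6"
    proof -
      have "?S = (\<Sum>x\<in>V'. d x) + (\<Sum>x\<in>{a, b, c}. d x)" unfolding V'_def
        using abcV fin by (intro sum.subset_diff) auto
      moreover have "(\<Sum>x\<in>{a, b, c}. d x) = 6" using abc dabc by simp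
      ultimately show ?thesis by simp
    qed
    have S2: "(\<Sum>x\<in>V'. d' x) + 2 = (\<Sum>x\<in>V'. d x)"
    proof -
      have "(\<Sum>x\<in>V'. d' x) = d' v + (\<Sum>x\<in>V' - {v}. d' x)" using sum.remove[OF finV' vV'] .
      moreover have "(\<Sum>x\<in>V' - {v}. d' x) = (\<Sum>x\<in>V' - {v}. d x)" unfolding d'_def by (intro sum.cong) auto
      moreover have "(\<Sum>x\<in>V'. d x) = d v + (\<Sum>x\<in>V' - {v}. d x)" using sum.remove[OF finV' vV'] .
      moreover have "d' v = d v - 2" unfolding d'_def by simp
      ultimately show ?thesis using dv4 by simp
    qed
    have IH: "\<exists>E. good V' E \<and> (\<forall>x\<in>V'. card {e \<in> E. x \<in> e} = d' x)"
    proof (rule less.hyps)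
      show "card V' < card V" using cardV' n5 by simp
      show "finite V'" by fact
      show "V' \<noteq> {}" using vV' by blast
      show "\<forall>x\<in>V'. even (d' x) \<and> 2 \<le> d' x" using dv dv4 unfolding d'_def V'_def by auto
      show "4 dvd (\<Sum>x\<in>V'. d' x)" using d4 S1 S2 by presburger
      show "3 * (\<Sum>x\<in>V'. d' x) \<le> 8 * (card V' - 1)" using bnd S1 S2 cardV' n5 by linarith
    qed
    then obtain E' where E': "good V' E'" "\<forall>x\<in>V'. card {e \<in> E'. x \<in> e} = d' x" by blast
    define ws where "ws = [v, a, b, c]"
    have wsd: "distinct ws" unfolding ws_def using abc vabc by simp
    have ws4: "length ws = 4" unfolding ws_def by simp
    have gC: "good (set ws) (cycle_edges ws)" using cycle_good[OF wsd] ws4 by simp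
    have int: "V' \<inter> set ws = {v}" unfolding V'_def ws_def using v vabc by auto
    have un: "V' \<union> set ws = V" unfolding V'_def ws_def using v abcV by auto
    have g: "good V (E' \<union> cycle_edges ws)" using glue_good[OF E'(1) gC int] un by simp
    have sg1: "simple_graph V' E'" using E'(1) unfolding good_def by simp
    have sg2: "simple_graph (set ws) (cycle_edges ws)" using gC unfolding good_def by simp
    have "\<forall>x\<in>V. card {e \<in> E' \<union> cycle_edges ws. x \<in> e} = d x"
    proof
      fix x assume xV: "x \<in> V"
      have "card {e \<in> E' \<union> cycle_edges ws. x \<in> e} = card {e \<in> E'. x \<in> e} + card {e \<in> cycle_edges ws. x \<in> e}"
        using glue_deg[OF sg1 sg2 int finV'] by simp
      moreover have "card {e \<in> cycle_edges ws. x \<in> e} = (if x \<in> set ws then 2 else 0)"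
        using deg_cycle[OF wsd] ws4 by simp
      moreover have "card {e \<in> E'. x \<in> e} = (if x \<in> V' then d' x else 0)"
        using E'(2) deg_out[OF sg1] by simp
      ultimately show "card {e \<in> E' \<union> cycle_edges ws. x \<in> e} = d x"
        using xV dabc dv4 unfolding d'_def V'_def ws_def by auto
    qed
    then show ?thesis using g by blast
  qed
qed



definition rel :: "'a set \<Rightarrow> 'a set set \<Rightarrow> ('a \<times> 'a) set" where
  "rel V F = {(x, y). x \<in> V \<and> y \<in> V \<and> reachable F x y}"

definition ncomp :: "'a set \<Rightarrow> 'a set set \<Rightarrow> nat" where
  "ncomp V F = card (V // rel V F)"

lemma rel_equiv: "equiv V (rel V F)"
proof (rule equivI)
  show "rel V F \<subseteq> V \<times> V" unfolding rel_def by auto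
  show "refl_on V (rel V F)" unfolding refl_on_def rel_def by (auto simp: reach_refl)
  show "sym (rel V F)" unfolding rel_def by (rule symI) (auto intro: reach_sym)
  show "trans (rel V F)" unfolding rel_def by (rule transI) (auto intro: reach_trans)
qed

lemma quot_img: "V // R = (\<lambda>x. R `` {x}) ` V"
  unfolding quotient_def by auto

lemma ncomp_le: "finite V \<Longrightarrow> ncomp V F \<le> card V"
  unfolding ncomp_def quot_img by (rule card_image_le)

lemma quot_refine:
  assumes fin: "finite V" and e1: "equiv V R1" and e2: "equiv V R2" and sub: "R1 \<subseteq> R2"
  shows "card (V // R2) \<le> card (V // R1)"
    and "(x, y) \<in> R2 \<Longrightarrow> (x, y) \<notin> R1 \<Longrightarrow> card (V // R2) < card (V // R1)"
proof -
  let ?f = "\<lambda>X. R2 `` X"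
  have img: "?f (R1 `` {x}) = R2 `` {x}" if "x \<in> V" for x
  proof
    have tr: "trans R2" using e2 by (simp add: equiv_def)
    show "R2 `` (R1 `` {x}) \<subseteq> R2 `` {x}"
    proof
      fix z assume "z \<in> R2 `` (R1 `` {x})"
      then obtain y where y: "(x, y) \<in> R1" "(y, z) \<in> R2" by blast
      then have "(x, y) \<in> R2" using sub by blast
      then have "(x, z) \<in> R2" using y(2) tr by (meson transD)
      then show "z \<in> R2 `` {x}" by simp
    qed
    have "(x, x) \<in> R1" using e1 that unfolding equiv_def refl_on_def by blast
    then have "x \<in> R1 `` {x}" by simp
    then show "R2 `` {x} \<subseteq> R2 `` (R1 `` {x})" by blast
  qed
  have eq: "?f ` (V // R1) = V // R2"
  proof -
    have "?f ` (V // R1) = (\<lambda>x. ?f (R1 `` {x})) ` V" unfolding quot_img by (simp add: image_image)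
    also have "\<dots> = (\<lambda>x. R2 `` {x}) ` V" using img by (intro image_cong) auto
    finally show ?thesis unfolding quot_img .
  qed
  have finq: "finite (V // R1)" unfolding quot_img using fin by simp
  show "card (V // R2) \<le> card (V // R1)" unfolding eq[symmetric] by (rule card_image_le[OF finq])
  assume xy2: "(x, y) \<in> R2" and xy1: "(x, y) \<notin> R1"
  have xV: "x \<in> V" and yV: "y \<in> V" using xy2 e2 unfolding equiv_def refl_on_def by auto
  have "R1 `` {x} \<noteq> R1 `` {y}"
  proof
    assume h: "R1 `` {x} = R1 `` {y}"
    have "(y, y) \<in> R1" using e1 yV unfolding equiv_def refl_on_def by blast
    then have "y \<in> R1 `` {y}" by simp
    then have "y \<in> R1 `` {x}" using h by simp
    then show False using xy1 by simp
  qed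
  moreover have "?f (R1 `` {x}) = ?f (R1 `` {y})"
    using img[OF xV] img[OF yV] equiv_class_eq[OF e2 xy2] by simp
  moreover have "R1 `` {x} \<in> V // R1" "R1 `` {y} \<in> V // R1" using xV yV unfolding quot_img by auto
  ultimately have "\<not> inj_on ?f (V // R1)" by (meson inj_onD)
  then have "card (?f ` (V // R1)) \<noteq> card (V // R1)" using inj_on_iff_eq_card[OF finq] by blast
  then show "card (V // R2) < card (V // R1)"
    using card_image_le[OF finq, of ?f] unfolding eq by simp
qed

lemma sg_edge:
  assumes "simple_graph V E" "e \<in> E"
  shows "\<exists>u w. u \<in> V \<and> w \<in> V \<and> u \<noteq> w \<and> e = {u, w}"
  using assms(1)[unfolded simple_graph_def, rule_format, OF assms(2)] .

lemma rel_mono: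
  assumes "F \<subseteq> E" shows "rel V F \<subseteq> rel V E"
  unfolding rel_def using reach_mono[OF assms] by auto

lemma is_cycle_mono: "F \<subseteq> E \<Longrightarrow> is_cycle F C \<Longrightarrow> is_cycle E C"
  unfolding is_cycle_def by blast

lemma no_cycle_empty: "\<not> is_cycle {} C"
proof
  assume "is_cycle {} C"
  then obtain vs where "3 \<le> length vs" "C = cycle_edges vs" "C \<subseteq> {}" unfolding is_cycle_def by blast
  moreover have "0 < length vs" using \<open>3 \<le> length vs\<close> by linarith
  then have "0 \<in> {..<length vs}" by simp
  ultimately have "ce vs 0 \<in> C" unfolding cycle_edges_ce by blast
  then show False using \<open>C \<subseteq> {}\<close> by blast
qed

lemma fin_cyc: "finite E \<Longrightarrow> finite {C. is_cycle E C}"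
  by (rule finite_subset[of _ "Pow E"]) (auto simp: is_cycle_def)

lemma cyclomatic:
  assumes "finite E" "finite V" "simple_graph V E"
  shows "card E + ncomp V E \<le> card V + card {C. is_cycle E C}"
  using assms
proof (induction E rule: finite_induct)
  case empty
  then show ?case using ncomp_le[of V "{}"] no_cycle_empty by simp
next
  case (insert e F)
  let ?E = "insert e F"
  have sgF: "simple_graph V F" using insert.prems(2) unfolding simple_graph_def by simp
  have IH: "card F + ncomp V F \<le> card V + card {C. is_cycle F C}" using insert.IH insert.prems(1) sgF by blast
  obtain u w where "u \<in> V \<and> w \<in> V \<and> u \<noteq> w \<and> e = {u, w}"
    using sg_edge[OF insert.prems(2) insertI1] by blast
  then have uw: "u \<in> V" "w \<in> V" "u \<noteq> w" "e = {u, w}" by auto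
  have cE: "card ?E = card F + 1" using insert.hyps by simp
  have finE: "finite {C. is_cycle ?E C}" using fin_cyc insert.hyps(1) by blast
  have refine: "card (V // rel V ?E) \<le> card (V // rel V F)"
    using quot_refine(1)[OF insert.prems(1) rel_equiv rel_equiv rel_mono[OF subset_insertI]] by blast
  show ?case
  proof (cases "\<exists>C. is_cycle ?E C \<and> e \<in> C")
    case True
    then obtain C where C: "is_cycle ?E C" "e \<in> C" by blast
    have "{C. is_cycle F C} \<subseteq> {C. is_cycle ?E C} - {C}"
    proof
      fix C' assume "C' \<in> {C. is_cycle F C}"
      then have c': "is_cycle F C'" by simp
      then have "is_cycle ?E C'" using is_cycle_mono[OF subset_insertI] by blast
      moreover have "C' \<subseteq> F" using c' unfolding is_cycle_def by blast
      then have "C' \<noteq> C" using C(2) insert.hyps(2) by blast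
      ultimately show "C' \<in> {C. is_cycle ?E C} - {C}" by simp
    qed
    then have "card {C. is_cycle F C} \<le> card ({C. is_cycle ?E C} - {C})"
      using finE by (intro card_mono) auto
    also have "\<dots> = card {C. is_cycle ?E C} - 1" using C(1) finE by simp
    finally have cc0: "card {C. is_cycle F C} \<le> card {C. is_cycle ?E C} - 1" .
    have "card {C. is_cycle ?E C} > 0" using C(1) finE card_gt_0_iff by blast
    then have cc: "card {C. is_cycle F C} + 1 \<le> card {C. is_cycle ?E C}" using cc0 by linarith
    show ?thesis using IH cE cc refine unfolding ncomp_def by linarith
  next
    case False
    have nr: "\<not> reachable F u w"
    proof
      assume "reachable F u w"
      from reach_path[OF this] obtain ps where "spath F ps \<and> hd ps = u \<and> last ps = w" by (rule exE)
      note psc = this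
      note ps = conjunct1[OF psc] conjunct1[OF conjunct2[OF psc]] conjunct2[OF conjunct2[OF psc]]
      have n1: "{u, w} \<notin> F" using insert.hyps(2) uw(4) by simp
      have n2: "F \<subseteq> ?E" by (rule subset_insertI)
      have n3: "{u, w} \<in> ?E" using uw(4) by simp
      have cyc: "is_cycle ?E (cycle_edges ps) \<and> {u, w} \<in> cycle_edges ps"
        by (rule path_cycle[OF ps uw(3) n1 n2 n3])
      then have "e \<in> cycle_edges ps" using uw(4) by simp
      then show False using False cyc by blast
    qed
    have "(u, w) \<in> rel V ?E" unfolding rel_def using uw reach_edge[of u w ?E] by simp
    moreover have "(u, w) \<notin> rel V F" unfolding rel_def using nr by simp
    ultimately have strict: "card (V // rel V ?E) < card (V // rel V F)"
      using quot_refine(2)[OF insert.prems(1) rel_equiv rel_equiv rel_mono[OF subset_insertI]] by blast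
    have "{C. is_cycle F C} \<subseteq> {C. is_cycle ?E C}" using is_cycle_mono[OF subset_insertI] by blast
    then have "card {C. is_cycle F C} \<le> card {C. is_cycle ?E C}" using finE by (rule card_mono[rotated])
    then show ?thesis using IH cE strict unfolding ncomp_def by linarith
  qed
qed

lemma ncomp_conn:
  assumes "connected_graph V E" "V \<noteq> {}"
  shows "ncomp V E = 1"
proof -
  have "V // rel V E = {V}"
  proof -
    have "rel V E `` {x} = V" if "x \<in> V" for x
      using assms(1) that unfolding rel_def connected_graph_def by auto
    then have "(\<lambda>x. rel V E `` {x}) ` V = (\<lambda>x. V) ` V" by (intro image_cong) auto
    then show ?thesis unfolding quot_img using assms(2) by auto
  qed
  then show ?thesis unfolding ncomp_def by simp
qed

lemma handshake:
  assumes sg: "simple_graph V E" and fin: "finite V"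
  shows "(\<Sum>x\<in>V. card {e \<in> E. x \<in> e}) = 2 * card E"
proof -
  have finE: "finite E" using sg_fin[OF sg fin] .
  have "(\<Sum>x\<in>V. card {e \<in> E. x \<in> e}) = (\<Sum>x\<in>V. \<Sum>e\<in>E. if x \<in> e then 1 else 0)"
    using sum.inter_filter[OF finE, of "\<lambda>_. 1::nat"] by simp
  also have "\<dots> = (\<Sum>e\<in>E. \<Sum>x\<in>V. if x \<in> e then 1 else 0)" by (rule sum.swap)
  also have "\<dots> = (\<Sum>e\<in>E. card {x \<in> V. x \<in> e})"
    using sum.inter_filter[OF fin, of "\<lambda>_. 1::nat"] by simp
  also have "\<dots> = (\<Sum>e\<in>E. 2)"
  proof (rule sum.cong[OF refl])
    fix e assume e: "e \<in> E"
    have "{x \<in> V. x \<in> e} = e" using sg_sub[OF sg e] by blast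
    then show "card {x \<in> V. x \<in> e} = 2" using sg_card2[OF sg e] by simp
  qed
  finally show ?thesis by simp
qed

lemma nec:
  assumes fin: "finite V" and ne: "V \<noteq> {}" and sg: "simple_graph V E" and conn: "connected_graph V E"
    and br: "bridgeless V E" and bip: "bipartite V E" and cc: "cactus_cond E"
  shows "(\<forall>x. even (card {e \<in> E. x \<in> e})) \<and> even (card E) \<and> 3 * card E \<le> 4 * (card V - 1)"
proof -
  let ?Cy = "{C. is_cycle E C}"
  have finE: "finite E" using sg_fin[OF sg fin] .
  have finCy: "finite ?Cy" using fin_cyc[OF finE] .
  obtain A where A: "\<forall>e\<in>E. card (e \<inter> A) = 1" using bip unfolding bipartite_def by blast
  have cov: "\<exists>C\<in>?Cy. e \<in> C" if e: "e \<in> E" for e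
  proof -
    obtain u w where "u \<in> V \<and> w \<in> V \<and> u \<noteq> w \<and> e = {u, w}"
      using sg_edge[OF sg e] by blast
    then have uw: "u \<in> V" "w \<in> V" "u \<noteq> w" "e = {u, w}" by auto
    have "reachable (E - {e}) u w" using br e uw unfolding bridgeless_def connected_graph_def by blast
    from reach_path[OF this] obtain ps where "spath (E - {e}) ps \<and> hd ps = u \<and> last ps = w" by (rule exE)
    note psc = this
    note ps = conjunct1[OF psc] conjunct1[OF conjunct2[OF psc]] conjunct2[OF conjunct2[OF psc]]
    have n1: "{u, w} \<notin> E - {e}" using uw(4) by simp
    have n2: "E - {e} \<subseteq> E" by (rule Diff_subset)
    have n3: "{u, w} \<in> E" using uw(4) e by simp
    have cyc: "is_cycle E (cycle_edges ps) \<and> {u, w} \<in> cycle_edges ps"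
      by (rule path_cycle[OF ps uw(3) n1 n2 n3])
    then have "e \<in> cycle_edges ps" using uw(4) by simp
    then show ?thesis using cyc by blast
  qed
  have disj: "C1 \<inter> C2 = {}" if "C1 \<in> ?Cy" "C2 \<in> ?Cy" "C1 \<noteq> C2" for C1 C2
  proof (rule ccontr)
    assume "C1 \<inter> C2 \<noteq> {}"
    then obtain e where e: "e \<in> C1" "e \<in> C2" by blast
    have "e \<in> E" using that(1) e(1) unfolding is_cycle_def by blast
    then show False using cc that e unfolding cactus_cond_def by blast
  qed
  have cyc_card: "even (card C) \<and> 4 \<le> card C" if Cc: "C \<in> ?Cy" for C
  proof -
    obtain vs where vs: "distinct vs" "3 \<le> length vs" "C = cycle_edges vs" "C \<subseteq> E"
      using Cc unfolding is_cycle_def by blast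
    have "even (length vs)" using even_cycle[OF vs(1,2)] A vs(3,4) by blast
    moreover have "card C = length vs" using card_ce[OF vs(1,2)] vs(3) by simp
    ultimately show ?thesis using vs(2) by presburger
  qed
  have finC: "finite C" if "C \<in> ?Cy" for C
    using that finE unfolding is_cycle_def by (blast intro: finite_subset)
  have Eun: "E = (\<Union>C\<in>?Cy. C)"
  proof
    show "E \<subseteq> (\<Union>C\<in>?Cy. C)" using cov by blast
    show "(\<Union>C\<in>?Cy. C) \<subseteq> E" unfolding is_cycle_def by blast
  qed
  have cardE: "card E = (\<Sum>C\<in>?Cy. card C)"
  proof -
    have "card (\<Union>C\<in>?Cy. C) = (\<Sum>C\<in>?Cy. card C)"
      by (rule card_UN_disjoint[OF finCy]) (use finC disj in auto)
    then show ?thesis using Eun by simp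
  qed
  have evE: "even (card E)" unfolding cardE by (rule dvd_sum) (use cyc_card in blast)
  have c4: "4 * card ?Cy \<le> card E"
  proof -
    have "(\<Sum>C\<in>?Cy. (4::nat)) \<le> (\<Sum>C\<in>?Cy. card C)" by (rule sum_mono) (use cyc_card in blast)
    then show ?thesis unfolding cardE by simp
  qed
  have deg: "even (card {e \<in> E. x \<in> e})" for x
  proof -
    have "{e \<in> E. x \<in> e} = (\<Union>C\<in>?Cy. {e \<in> C. x \<in> e})" using Eun by blast
    moreover have "card (\<Union>C\<in>?Cy. {e \<in> C. x \<in> e}) = (\<Sum>C\<in>?Cy. card {e \<in> C. x \<in> e})"
      by (rule card_UN_disjoint[OF finCy]) (use finC disj in auto)
    moreover have "even (\<Sum>C\<in>?Cy. card {e \<in> C. x \<in> e})"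
    proof (rule dvd_sum)
      fix C assume "C \<in> ?Cy"
      then obtain vs where vs: "distinct vs" "3 \<le> length vs" "C = cycle_edges vs"
        unfolding is_cycle_def by blast
      show "even (card {e \<in> C. x \<in> e})" using deg_cycle[OF vs(1,2), of x] vs(3) by simp
    qed
    ultimately show ?thesis by simp
  qed
  have "card E + ncomp V E \<le> card V + card ?Cy" using cyclomatic[OF finE fin sg] .
  then have "card E + 1 \<le> card V + card ?Cy" using ncomp_conn[OF conn ne] by simp
  then have "3 * card E \<le> 4 * (card V - 1)" using c4 by linarith
  then show ?thesis using deg evE by blast
qed



lemma four_dvd: "even ((s::nat) div 2) \<Longrightarrow> even s \<Longrightarrow> 4 dvd s"
  by (elim evenE) (auto simp: dvd_def)
lemma bound1: "3 * (m::nat) \<le> 4 * k \<Longrightarrow> even m \<Longrightarrow> m \<le> 2 * ((2 * k) div 3)"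
proof -
  assume a: "3 * m \<le> 4 * k" and "even m"
  then obtain t where t: "m = 2 * t" by (elim evenE)
  then have "t * 3 \<le> 2 * k" using a by simp
  then have "t \<le> (2 * k) div 3" by (simp add: less_eq_div_iff_mult_less_eq)
  then show ?thesis using t by simp
qed
lemma bound2: "(s::nat) div 2 \<le> 2 * ((2 * k) div 3) \<Longrightarrow> even s \<Longrightarrow> 3 * s \<le> 8 * k"
proof -
  assume a: "s div 2 \<le> 2 * ((2 * k) div 3)" and "even s"
  then obtain t where t: "s = 2 * t" by (elim evenE)
  have q: "3 * ((2 * k) div 3) \<le> 2 * k" by simp
  have "t \<le> 2 * ((2 * k) div 3)" using a t by simp
  then have "3 * t \<le> 4 * k" using q by linarith
  then show ?thesis using t by simp
qed

theorem theorem5p5: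
  fixes n :: nat and d :: "nat \<Rightarrow> nat"
  assumes "degree_sequence n d" and "4 \<le> n"
  shows "(\<exists>E. realization n d E \<and> cactus {1..n} E \<and> bridgeless {1..n} E \<and> bipartite {1..n} E)
     \<longleftrightarrow> ((\<Sum>i=1..n. d i) div 2 \<le> 2 * ((2 * (n - 1)) div 3)
          \<and> even ((\<Sum>i=1..n. d i) div 2) \<and> (\<forall>i\<in>{1..n}. even (d i)))"
proof -
  let ?V = "{1..n}"
  let ?S = "\<Sum>i=1..n. d i"
  have db: "\<forall>i\<in>?V. 1 \<le> d i" and evS: "even ?S"
    using assms(1) unfolding degree_sequence_def by auto
  have cardV: "card ?V = n" by simp
  have finV: "finite ?V" by simp
  have neV: "?V \<noteq> {}" using assms(2) by simp
  show ?thesis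
  proof
    assume "\<exists>E. realization n d E \<and> cactus {1..n} E \<and> bridgeless {1..n} E \<and> bipartite {1..n} E"
    then obtain E where r: "realization n d E" and c: "cactus ?V E" and b: "bridgeless ?V E"
      and p: "bipartite ?V E" by blast
    have sg: "simple_graph ?V E" and deg: "\<forall>i\<in>?V. card {e \<in> E. i \<in> e} = d i"
      using r unfolding realization_def by auto
    have conn: "connected_graph ?V E" and cc: "cactus_cond E" using c unfolding cactus_iff by auto
    have N: "(\<forall>x. even (card {e \<in> E. x \<in> e})) \<and> even (card E) \<and> 3 * card E \<le> 4 * (card ?V - 1)"
      by (rule nec[OF finV neV sg conn b p cc])
    have "(\<Sum>x\<in>?V. card {e \<in> E. x \<in> e}) = 2 * card E" by (rule handshake[OF sg finV])
    moreover have "(\<Sum>x\<in>?V. card {e \<in> E. x \<in> e}) = ?S" using deg by (intro sum.cong) auto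
    ultimately have SE: "?S = 2 * card E" by simp
    have m: "?S div 2 = card E" using SE by simp
    have b3: "3 * card E \<le> 4 * (n - 1)" using N cardV by simp
    have evm: "even (card E)" using N by simp
    have "card E \<le> 2 * ((2 * (n - 1)) div 3)" using bound1[OF b3 evm] .
    moreover have "\<forall>i\<in>?V. even (d i)"
    proof
      fix i assume "i \<in> ?V"
      then have "card {e \<in> E. i \<in> e} = d i" using deg by blast
      moreover have "even (card {e \<in> E. i \<in> e})" using N by blast
      ultimately show "even (d i)" by simp
    qed
    ultimately show "?S div 2 \<le> 2 * ((2 * (n - 1)) div 3) \<and> even (?S div 2) \<and> (\<forall>i\<in>?V. even (d i))"
      using m evm by simp
  next
    assume h: "?S div 2 \<le> 2 * ((2 * (n - 1)) div 3) \<and> even (?S div 2) \<and> (\<forall>i\<in>?V. even (d i))"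
    have dv: "\<forall>x\<in>?V. even (d x) \<and> 2 \<le> d x"
    proof
      fix x assume x: "x \<in> ?V"
      then have "even (d x)" "1 \<le> d x" using h db by auto
      then show "even (d x) \<and> 2 \<le> d x" by presburger
    qed
    have h1: "?S div 2 \<le> 2 * ((2 * (n - 1)) div 3)" and h2: "even (?S div 2)" using h by auto
    have d4: "4 dvd ?S" using four_dvd[OF h2 evS] .
    have "3 * ?S \<le> 8 * (n - 1)" using bound2[OF h1 evS] .
    then have bnd: "3 * ?S \<le> 8 * (card ?V - 1)" using cardV by simp
    obtain E where E: "good ?V E" "\<forall>x\<in>?V. card {e \<in> E. x \<in> e} = d x"
      using suff[OF finV neV dv d4 bnd] by blast
    have "realization n d E" unfolding realization_def using E unfolding good_def by auto
    moreover have "cactus ?V E" unfolding cactus_iff using E(1) unfolding good_def by auto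
    moreover have "bridgeless ?V E" "bipartite ?V E" using E(1) unfolding good_def by auto
    ultimately show "\<exists>E. realization n d E \<and> cactus {1..n} E \<and> bridgeless {1..n} E \<and> bipartite {1..n} E"
      by blast
  qed
qed

end
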